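(* Let $b_1(\sigma),\dots,b_m(\sigma)$ be arbitrary functions on $\Sigma_N=\{-1,1\}^N$ taking values in $[-1,1]$. Then for any $k\ge1$ and any distinct indices $j_1,\dots,j_k\in\{2,\dots,N\}$, $$\mathbb{E}\bigl(g_{1j_1}g_{1j_2}\cdots g_{1j_k}\langle b_1\rangle\langle b_2\rangle\cdots\langle b_m\rangle\bigr) \le \frac{C(m,k)\beta^k}{N^{k/2}},$$ where $C(m,k)$ is a constant depending only on $m$ and $k$.
   Context: Sherrington–Kirkpatrick model: for a positive integer $N$, let $g=(g_{ij})_{1\le i<j\le N}$ be i.i.d. standard Gaussian random variables (the disorder), $\beta>0$, $h\in\mathbb{R}$. Given $g$, the Gibbs measure on $\Sigma_N$ is $G_N(\sigma)=Z_N^{-1}\exp\bigl(\frac{\beta}{\sqrt N}\sum_{1\le i<j\le N} g_{ij}\sigma_i\sigma_j + h\sum_{i=1}^N\sigma_i\bigr)$, with $Z_N$ the normalizing constant. $\langle b\rangle := \sum_\sigma b(\sigma)G_N(\sigma)$ is the quenched average, and $\mathbb{E}$ is expectation over the disorder. *)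

theory Defs
  imports "HOL-Probability.Probability"
begin

definition pairs :: "nat \<Rightarrow> (nat \<times> nat) set" where
  "pairs N = {(i, j). 1 \<le> i \<and> i < j \<and> j \<le> N}"

definition disorder :: "nat \<Rightarrow> (nat \<times> nat \<Rightarrow> real) measure" where
  "disorder N = PiM (pairs N) (\<lambda>_. density lborel std_normal_density)"

definition spins :: "nat \<Rightarrow> (nat \<Rightarrow> real) set" where
  "spins N = PiE {1..N} (\<lambda>_. {-1, 1})"

definition sk_weight :: "nat \<Rightarrow> real \<Rightarrow> real \<Rightarrow> (nat \<times> nat \<Rightarrow> real) \<Rightarrow> (nat \<Rightarrow> real) \<Rightarrow> real" where
  "sk_weight N \<beta> h g \<sigma> =
     exp (\<beta> / sqrt (real N) * (\<Sum>p\<in>pairs N. g p * \<sigma> (fst p) * \<sigma> (snd p))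
          + h * (\<Sum>i\<in>{1..N}. \<sigma> i))"

definition gibbs_avg :: "nat \<Rightarrow> real \<Rightarrow> real \<Rightarrow> (nat \<times> nat \<Rightarrow> real) \<Rightarrow> ((nat \<Rightarrow> real) \<Rightarrow> real) \<Rightarrow> real" where
  "gibbs_avg N \<beta> h g b =
     (\<Sum>\<sigma>\<in>spins N. b \<sigma> * sk_weight N \<beta> h g \<sigma>) / (\<Sum>\<sigma>\<in>spins N. sk_weight N \<beta> h g \<sigma>)"

end

theory Submission
  imports Defs
begin



fun good :: "nat set \<Rightarrow> nat \<Rightarrow> ((nat\<Rightarrow>real)\<Rightarrow>real) \<Rightarrow> (nat\<Rightarrow>real) \<Rightarrow> bool" where
  "good R 0 Q C = (\<forall>y. \<bar>Q y\<bar> \<le> C 0)"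
| "good R (Suc k) Q C = ((\<forall>y. \<bar>Q y\<bar> \<le> C 0) \<and>
     (\<forall>r\<in>R. \<exists>Q'. (\<forall>y u. ((\<lambda>v. Q (y(r:=v))) has_real_derivative Q' (y(r:=u))) (at u))
               \<and> good R k Q' (\<lambda>i. C (Suc i))))"

lemma good_bound: "good R k Q C \<Longrightarrow> \<bar>Q y\<bar> \<le> C 0"
  by (cases k) auto

lemma good_mono_C: "good R k Q C \<Longrightarrow> (\<And>i. C i \<le> C' i) \<Longrightarrow> good R k Q C'"
proof (induction k arbitrary: Q C C')
  case 0 then show ?case by (auto intro: order_trans)
next
  case (Suc k)
  show ?case
  proof (simp, intro conjI ballI allI)
    fix y show "\<bar>Q y\<bar> \<le> C' 0" using Suc.prems(1) Suc.prems(2)[of 0] by (auto intro: order_trans)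
  next
    fix r assume r: "r \<in> R"
    then obtain Q' where "\<forall>y u. ((\<lambda>v. Q (y(r:=v))) has_real_derivative Q' (y(r:=u))) (at u)"
      "good R k Q' (\<lambda>i. C (Suc i))" using Suc.prems(1) by auto
    then show "\<exists>Q'. (\<forall>y u. ((\<lambda>v. Q (y(r:=v))) has_real_derivative Q' (y(r:=u))) (at u))
               \<and> good R k Q' (\<lambda>i. C' (Suc i))"
      using Suc.IH[of Q' "\<lambda>i. C (Suc i)" "\<lambda>i. C' (Suc i)"] Suc.prems(2) by blast
  qed
qed

lemma good_Suc_down: "good R (Suc k) Q C \<Longrightarrow> good R k Q C"
proof (induction k arbitrary: Q C)
  case 0 then show ?case by simp
next
  case (Suc k)
  show ?case
  proof (simp only: good.simps, intro conjI ballI)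
    show "\<forall>y. \<bar>Q y\<bar> \<le> C 0" using Suc.prems by simp
  next
    fix r assume r: "r \<in> R"
    then obtain Q' where "\<forall>y u. ((\<lambda>v. Q (y(r:=v))) has_real_derivative Q' (y(r:=u))) (at u)"
      "good R (Suc k) Q' (\<lambda>i. C (Suc i))" using Suc.prems(1) by (simp only: good.simps) blast
    then show "\<exists>Q'. (\<forall>y u. ((\<lambda>v. Q (y(r:=v))) has_real_derivative Q' (y(r:=u))) (at u))
               \<and> good R k Q' (\<lambda>i. C (Suc i))"
      using Suc.IH by blast
  qed
qed

lemma good_const: "(\<And>i. \<bar>c\<bar> \<le> C i) \<Longrightarrow> good R k (\<lambda>_. c) C"
proof (induction k arbitrary: c C)
  case 0 then show ?case by simp
next
  case (Suc k)
  have "0 \<le> C (Suc i)" for i using Suc.prems[of "Suc i"] by (meson abs_ge_zero order_trans)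
  then have "good R k (\<lambda>_. 0) (\<lambda>i. C (Suc i))"
    using Suc.IH[of 0 "\<lambda>i. C (Suc i)"] by simp
  moreover have "((\<lambda>v. c) has_real_derivative 0) (at u)" for u by simp
  ultimately show ?case using Suc.prems by (auto intro!: exI[of _ "\<lambda>_. 0"])
qed

lemma good_neg: "good R k Q C \<Longrightarrow> good R k (\<lambda>y. - Q y) C"
proof (induction k arbitrary: Q C)
  case 0 then show ?case by simp
next
  case (Suc k)
  show ?case
  proof (simp only: good.simps, intro conjI ballI)
    show "\<forall>y. \<bar>- Q y\<bar> \<le> C 0" using Suc.prems by simp
  next
    fix r assume r: "r \<in> R"
    then obtain Q' where d: "\<forall>y u. ((\<lambda>v. Q (y(r:=v))) has_real_derivative Q' (y(r:=u))) (at u)"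
      and g: "good R k Q' (\<lambda>i. C (Suc i))" using Suc.prems(1) by (simp only: good.simps) blast
    have "\<forall>y u. ((\<lambda>v. - Q (y(r:=v))) has_real_derivative - Q' (y(r:=u))) (at u)"
      using d by (auto intro: derivative_intros)
    then show "\<exists>Q''. (\<forall>y u. ((\<lambda>v. - Q (y(r:=v))) has_real_derivative Q'' (y(r:=u))) (at u))
               \<and> good R k Q'' (\<lambda>i. C (Suc i))"
      using Suc.IH[OF g] by (intro exI[of _ "\<lambda>y. - Q' y"] conjI) auto
  qed
qed

lemma good_add: "good R k Q1 C1 \<Longrightarrow> good R k Q2 C2 \<Longrightarrow> good R k (\<lambda>y. Q1 y + Q2 y) (\<lambda>i. C1 i + C2 i)"
proof (induction k arbitrary: Q1 Q2 C1 C2)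
  case 0 then show ?case by (auto intro: abs_triangle_ineq[THEN order_trans] add_mono)
next
  case (Suc k)
  show ?case
  proof (simp only: good.simps, intro conjI ballI allI)
    fix y show "\<bar>Q1 y + Q2 y\<bar> \<le> C1 0 + C2 0" using Suc.prems
      by (simp only: good.simps) (meson abs_triangle_ineq add_mono order_trans)
  next
    fix r assume r: "r \<in> R"
    obtain Q1' where d1: "\<forall>y u. ((\<lambda>v. Q1 (y(r:=v))) has_real_derivative Q1' (y(r:=u))) (at u)"
      and g1: "good R k Q1' (\<lambda>i. C1 (Suc i))" using Suc.prems(1) r by (simp only: good.simps) blast
    obtain Q2' where d2: "\<forall>y u. ((\<lambda>v. Q2 (y(r:=v))) has_real_derivative Q2' (y(r:=u))) (at u)"
      and g2: "good R k Q2' (\<lambda>i. C2 (Suc i))" using Suc.prems(2) r by (simp only: good.simps) blast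
    have "\<forall>y u. ((\<lambda>v. Q1 (y(r:=v)) + Q2 (y(r:=v))) has_real_derivative Q1' (y(r:=u)) + Q2' (y(r:=u))) (at u)"
      using d1 d2 by (auto intro: derivative_intros)
    then show "\<exists>Q'. (\<forall>y u. ((\<lambda>v. Q1 (y(r:=v)) + Q2 (y(r:=v))) has_real_derivative Q' (y(r:=u))) (at u))
               \<and> good R k Q' (\<lambda>i. C1 (Suc i) + C2 (Suc i))"
      using Suc.IH[OF g1 g2] by (intro exI[of _ "\<lambda>y. Q1' y + Q2' y"] conjI) auto
  qed
qed

lemma good_mult:
  assumes "good R k Q1 C1" "good R k Q2 C2"
    "\<And>i. C1 i \<le> C1 (Suc i)" "\<And>i. C2 i \<le> C2 (Suc i)" "\<And>i. 0 \<le> C1 i" "\<And>i. 0 \<le> C2 i"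
  shows "good R k (\<lambda>y. Q1 y * Q2 y) (\<lambda>i. 2^i * C1 i * C2 i)"
  using assms
proof (induction k arbitrary: Q1 Q2 C1 C2)
  case 0 then show ?case by (auto simp: abs_mult intro: mult_mono)
next
  case (Suc k)
  show ?case
  proof (simp only: good.simps, intro conjI ballI allI)
    fix y show "\<bar>Q1 y * Q2 y\<bar> \<le> 2^0 * C1 0 * C2 0" using Suc.prems
      by (auto simp: abs_mult intro: mult_mono)
  next
    fix r assume r: "r \<in> R"
    obtain Q1' where d1: "\<forall>y u. ((\<lambda>v. Q1 (y(r:=v))) has_real_derivative Q1' (y(r:=u))) (at u)"
      and g1: "good R k Q1' (\<lambda>i. C1 (Suc i))" using Suc.prems(1) r by (simp only: good.simps) blast
    obtain Q2' where d2: "\<forall>y u. ((\<lambda>v. Q2 (y(r:=v))) has_real_derivative Q2' (y(r:=u))) (at u)"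
      and g2: "good R k Q2' (\<lambda>i. C2 (Suc i))" using Suc.prems(2) r by (simp only: good.simps) blast
    have d: "\<forall>y u. ((\<lambda>v. Q1 (y(r:=v)) * Q2 (y(r:=v))) has_real_derivative
         Q1' (y(r:=u)) * Q2 (y(r:=u)) + Q1 (y(r:=u)) * Q2' (y(r:=u))) (at u)"
    proof (intro allI)
      fix y u
      have "((\<lambda>v. Q1 (y(r:=v)) * Q2 (y(r:=v))) has_real_derivative
         Q1 ((y(r:=u))) * Q2' (y(r:=u)) + Q1' (y(r:=u)) * Q2 (y(r:=u))) (at u)"
        using DERIV_mult[OF d1[rule_format, of y u] d2[rule_format, of y u]]
        by (metis (no_types) add.commute mult.commute)
      then show "((\<lambda>v. Q1 (y(r:=v)) * Q2 (y(r:=v))) has_real_derivative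
         Q1' (y(r:=u)) * Q2 (y(r:=u)) + Q1 (y(r:=u)) * Q2' (y(r:=u))) (at u)"
        by (simp add: add.commute)
    qed
    have a: "good R k (\<lambda>y. Q1' y * Q2 y) (\<lambda>i. 2^i * C1 (Suc i) * C2 i)"
      using Suc.IH[OF g1 good_Suc_down[OF Suc.prems(2)]] Suc.prems(3-6) by blast
    have b: "good R k (\<lambda>y. Q1 y * Q2' y) (\<lambda>i. 2^i * C1 i * C2 (Suc i))"
      using Suc.IH[OF good_Suc_down[OF Suc.prems(1)] g2] Suc.prems(3-6) by blast
    have c: "good R k (\<lambda>y. Q1' y * Q2 y + Q1 y * Q2' y) (\<lambda>i. 2 ^ Suc i * C1 (Suc i) * C2 (Suc i))"
    proof (rule good_mono_C[OF good_add[OF a b]])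
      fix i
      have "C1 (Suc i) * C2 i \<le> C1 (Suc i) * C2 (Suc i)"
        using Suc.prems by (intro mult_left_mono) auto
      moreover have "C1 i * C2 (Suc i) \<le> C1 (Suc i) * C2 (Suc i)"
        using Suc.prems by (intro mult_right_mono) auto
      ultimately show "2 ^ i * C1 (Suc i) * C2 i + 2 ^ i * C1 i * C2 (Suc i) \<le> 2 ^ Suc i * C1 (Suc i) * C2 (Suc i)"
        by (simp add: mult.assoc) (smt (verit) mult_left_mono zero_le_power)
    qed
    show "\<exists>Q'. (\<forall>y u. ((\<lambda>v. Q1 (y(r:=v)) * Q2 (y(r:=v))) has_real_derivative Q' (y(r:=u))) (at u))
               \<and> good R k Q' (\<lambda>i. 2 ^ Suc i * C1 (Suc i) * C2 (Suc i))"
      using d c by (intro exI[of _ "\<lambda>y. Q1' y * Q2 y + Q1 y * Q2' y"] conjI) auto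
  qed
qed

definition Dop :: "nat \<Rightarrow> ((nat\<Rightarrow>real)\<Rightarrow>real) \<Rightarrow> (nat\<Rightarrow>real)\<Rightarrow>real" where
  "Dop r Q = (\<lambda>y. (Q y - Q (y(r := - y r))) / 2)"

fun Dl :: "nat list \<Rightarrow> ((nat\<Rightarrow>real)\<Rightarrow>real) \<Rightarrow> (nat\<Rightarrow>real)\<Rightarrow>real" where
  "Dl [] Q = Q"
| "Dl (r # rs) Q = Dop r (Dl rs Q)"

lemma Dl_deriv:
  assumes "r \<notin> set rs" "\<forall>y u. ((\<lambda>v. Q (y(r:=v))) has_real_derivative Q' (y(r:=u))) (at u)"
  shows "\<forall>y u. ((\<lambda>v. Dl rs Q (y(r:=v))) has_real_derivative Dl rs Q' (y(r:=u))) (at u)"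
  using assms
proof (induction rs)
  case Nil then show ?case by simp
next
  case (Cons r2 rs)
  have ne: "r \<noteq> r2" "r \<notin> set rs" using Cons.prems(1) by auto
  have IH: "\<forall>y u. ((\<lambda>v. Dl rs Q (y(r:=v))) has_real_derivative Dl rs Q' (y(r:=u))) (at u)"
    by (rule Cons.IH[OF ne(2) Cons.prems(2)])
  show ?case
  proof (intro allI)
    fix y u
    have e: "(y(r:=v))(r2 := - (y(r:=v)) r2) = (y(r2 := - y r2))(r := v)" for v :: real
      using ne(1) by (auto simp: fun_eq_iff)
    have "((\<lambda>v. (Dl rs Q (y(r:=v)) - Dl rs Q ((y(r2 := - y r2))(r := v))) / 2) has_real_derivative
         (Dl rs Q' (y(r:=u)) - Dl rs Q' ((y(r2 := - y r2))(r := u))) / 2) (at u)"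
      using DERIV_cdivide[OF DERIV_diff[OF IH[rule_format, of y u] IH[rule_format, of "y(r2 := - y r2)" u]], of 2] by simp
    then show "((\<lambda>v. Dl (r2 # rs) Q (y(r:=v))) has_real_derivative Dl (r2 # rs) Q' (y(r:=u))) (at u)"
      unfolding Dl.simps Dop_def e by assumption
  qed
qed

lemma main_bound:
  "good R k Q C \<Longrightarrow> distinct rs \<Longrightarrow> set rs \<subseteq> R \<Longrightarrow> length rs \<le> k \<Longrightarrow>
   \<bar>Dl rs Q y\<bar> \<le> C (length rs) * (\<Prod>r\<in>set rs. \<bar>y r\<bar>)"
proof (induction rs arbitrary: k Q C y)
  case Nil then show ?case using good_bound by simp
next
  case (Cons r rs)
  then obtain k' where k: "k = Suc k'" by (cases k) auto
  have r: "r \<in> R" "r \<notin> set rs" using Cons.prems by auto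
  obtain Q' where d: "\<forall>y u. ((\<lambda>v. Q (y(r:=v))) has_real_derivative Q' (y(r:=u))) (at u)"
      and g: "good R k' Q' (\<lambda>i. C (Suc i))" using Cons.prems(1) r k by (simp only: good.simps) blast
  have dd: "\<forall>y u. ((\<lambda>v. Dl rs Q (y(r:=v))) has_real_derivative Dl rs Q' (y(r:=u))) (at u)"
    by (rule Dl_deriv[OF r(2) d])
  have IH: "\<bar>Dl rs Q' z\<bar> \<le> C (Suc (length rs)) * (\<Prod>r\<in>set rs. \<bar>z r\<bar>)" for z
    using Cons.IH[OF g, of z] Cons.prems k by auto
  define \<phi> where "\<phi> = (\<lambda>v. Dl rs Q (y(r:=v)))"
  have val: "Dl (r # rs) Q y = (\<phi> (y r) - \<phi> (- y r)) / 2"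
    by (simp add: Dop_def \<phi>_def)
  have pr: "(\<Prod>r\<in>set rs. \<bar>(y(r':=z)) r\<bar>) = (\<Prod>r\<in>set rs. \<bar>y r\<bar>)" if "r' \<notin> set rs" for r' z
    using that by (intro prod.cong) auto
  have key: "\<bar>\<phi> a - \<phi> (- a)\<bar> \<le> 2 * \<bar>a\<bar> * (C (Suc (length rs)) * (\<Prod>r\<in>set rs. \<bar>y r\<bar>))" for a
  proof -
    have C0: "0 \<le> C (Suc (length rs)) * (\<Prod>r\<in>set rs. \<bar>y r\<bar>)"
      using IH[of y] by (meson abs_ge_zero order_trans)
    consider "a = 0" | "a \<noteq> 0" by blast
    then show ?thesis
    proof cases
      case 1 then show ?thesis using C0 by simp
    next
      case 2
      have "\<exists>z. - \<bar>a\<bar> < z \<and> z < \<bar>a\<bar> \<and> \<phi> \<bar>a\<bar> - \<phi> (- \<bar>a\<bar>) = (\<bar>a\<bar> - - \<bar>a\<bar>) * Dl rs Q' (y(r:=z))"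
        unfolding \<phi>_def apply (rule MVT2) using 2 apply simp using dd apply blast done
      then obtain z where z: "\<phi> \<bar>a\<bar> - \<phi> (- \<bar>a\<bar>) = (2 * \<bar>a\<bar>) * Dl rs Q' (y(r:=z))" by auto
      have "\<bar>\<phi> a - \<phi> (- a)\<bar> = \<bar>\<phi> \<bar>a\<bar> - \<phi> (- \<bar>a\<bar>)\<bar>"
        by (cases "a \<ge> 0") auto
      also have "\<dots> = 2 * \<bar>a\<bar> * \<bar>Dl rs Q' (y(r:=z))\<bar>" by (simp add: z abs_mult)
      also have "\<dots> \<le> 2 * \<bar>a\<bar> * (C (Suc (length rs)) * (\<Prod>r\<in>set rs. \<bar>y r\<bar>))"
        using IH[of "y(r:=z)"] pr[OF r(2)] by (intro mult_left_mono) auto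
      finally show ?thesis .
    qed
  qed
  have "\<bar>Dl (r # rs) Q y\<bar> \<le> \<bar>y r\<bar> * (C (Suc (length rs)) * (\<Prod>r\<in>set rs. \<bar>y r\<bar>))"
  proof -
    have "\<bar>Dl (r # rs) Q y\<bar> = \<bar>\<phi> (y r) - \<phi> (- y r)\<bar> / 2" by (simp only: val) simp
    then show ?thesis using key[of "y r"] by simp
  qed
  also have "\<dots> = C (length (r # rs)) * (\<Prod>r\<in>set (r # rs). \<bar>y r\<bar>)"
    using r(2) by simp
  finally show ?case .
qed




fun Ab :: "nat \<Rightarrow> real" where
  "Ab 0 = 1"
| "Ab (Suc i) = Ab i + 2^i * Ab i * Ab i"

lemma Ab_ge1: "1 \<le> Ab i"
proof (induction i)
  case 0 then show ?case by simp
next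
  case (Suc i)
  have "0 \<le> 2^i * Ab i * Ab i" using Suc by simp
  then show ?case using Suc by (simp only: Ab.simps)
qed

lemma Ab_nonneg: "0 \<le> Ab i"
  using Ab_ge1[of i] by linarith

lemma Ab_mono: "Ab i \<le> Ab (Suc i)"
  using Ab_ge1[of i] by simp

fun Pm :: "nat \<Rightarrow> nat \<Rightarrow> real" where
  "Pm 0 i = 1"
| "Pm (Suc m) i = 2^i * Ab i * Pm m i"

lemma Pm_nonneg: "0 \<le> Pm m i"
  by (induction m) (simp_all add: Ab_nonneg)

lemma Pm_mono: "Pm m i \<le> Pm m (Suc i)"
proof (induction m)
  case 0 then show ?case by simp
next
  case (Suc m)
  have "2^i * Ab i * Pm m i \<le> 2^Suc i * Ab (Suc i) * Pm m (Suc i)"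
    using Suc Ab_mono[of i] Ab_ge1[of i] Pm_nonneg[of m i]
    by (intro mult_mono) (auto intro!: mult_mono)
  then show ?case by simp
qed

locale gibbs =
  fixes S :: "'a set" and w :: "'a \<Rightarrow> real" and s :: "nat \<Rightarrow> 'a \<Rightarrow> real" and R :: "nat set"
  assumes finS: "finite S" and neS: "S \<noteq> {}" and wpos: "\<And>\<sigma>. \<sigma> \<in> S \<Longrightarrow> 0 < w \<sigma>"
    and sbd: "\<And>r \<sigma>. \<sigma> \<in> S \<Longrightarrow> \<bar>s r \<sigma>\<bar> \<le> 1" and finR: "finite R"
begin

definition W :: "(nat \<Rightarrow> real) \<Rightarrow> 'a \<Rightarrow> real" where
  "W y \<sigma> = w \<sigma> * exp (\<Sum>r'\<in>R. y r' * s r' \<sigma>)"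

definition avg :: "(nat \<Rightarrow> real) \<Rightarrow> ('a \<Rightarrow> real) \<Rightarrow> real" where
  "avg y f = (\<Sum>\<sigma>\<in>S. f \<sigma> * W y \<sigma>) / (\<Sum>\<sigma>\<in>S. W y \<sigma>)"

lemma W_pos: "\<sigma> \<in> S \<Longrightarrow> 0 < W y \<sigma>"
  using wpos by (simp add: W_def)

lemma Z_pos: "0 < (\<Sum>\<sigma>\<in>S. W y \<sigma>)"
  using W_pos finS neS by (intro sum_pos) auto

lemma avg_bound:
  assumes "\<forall>\<sigma>\<in>S. \<bar>f \<sigma>\<bar> \<le> 1"
  shows "\<bar>avg y f\<bar> \<le> 1"
proof -
  define A where "A = (\<Sum>\<sigma>\<in>S. f \<sigma> * W y \<sigma>)"
  define Z where "Z = (\<Sum>\<sigma>\<in>S. W y \<sigma>)"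
  have Zp: "0 < Z" unfolding Z_def by (rule Z_pos)
  have "\<bar>A\<bar> \<le> (\<Sum>\<sigma>\<in>S. \<bar>f \<sigma> * W y \<sigma>\<bar>)" unfolding A_def by (rule sum_abs)
  also have "\<dots> \<le> Z" unfolding Z_def
  proof (rule sum_mono)
    fix \<sigma> assume "\<sigma> \<in> S"
    then have h: "\<bar>f \<sigma>\<bar> \<le> 1" "0 < W y \<sigma>" using assms W_pos[of \<sigma> y] by auto
    then have "\<bar>f \<sigma>\<bar> * W y \<sigma> \<le> 1 * W y \<sigma>" by (intro mult_right_mono) auto
    moreover have "\<bar>f \<sigma> * W y \<sigma>\<bar> = \<bar>f \<sigma>\<bar> * W y \<sigma>" using h(2) by (simp add: abs_mult)
    ultimately show "\<bar>f \<sigma> * W y \<sigma>\<bar> \<le> W y \<sigma>" by simp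
  qed
  finally have AZ: "\<bar>A\<bar> \<le> Z" .
  have "avg y f = A / Z" unfolding avg_def A_def Z_def ..
  then have "\<bar>avg y f\<bar> = \<bar>A\<bar> / Z" using Zp by (simp add: abs_divide)
  also have "\<dots> \<le> 1" using AZ Zp by (simp add: pos_divide_le_eq)
  finally show ?thesis .
qed

lemma W_deriv:
  assumes "r \<in> R"
  shows "((\<lambda>v. W (y(r:=v)) \<sigma>) has_real_derivative W (y(r:=u)) \<sigma> * s r \<sigma>) (at u)"
proof -
  have e: "(\<Sum>r'\<in>R. (y(r:=v)) r' * s r' \<sigma>) = v * s r \<sigma> + (\<Sum>r'\<in>R-{r}. y r' * s r' \<sigma>)" for v
  proof -
    have "(\<Sum>r'\<in>R. (y(r:=v)) r' * s r' \<sigma>) = (y(r:=v)) r * s r \<sigma> + (\<Sum>r'\<in>R-{r}. (y(r:=v)) r' * s r' \<sigma>)"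
      using finR assms by (rule sum.remove)
    also have "(\<Sum>r'\<in>R-{r}. (y(r:=v)) r' * s r' \<sigma>) = (\<Sum>r'\<in>R-{r}. y r' * s r' \<sigma>)"
      by (intro sum.cong) auto
    finally show ?thesis by simp
  qed
  define c where "c = (\<Sum>r'\<in>R-{r}. y r' * s r' \<sigma>)"
  have "((\<lambda>v. w \<sigma> * exp (v * s r \<sigma> + c)) has_real_derivative w \<sigma> * (exp (u * s r \<sigma> + c) * (s r \<sigma>))) (at u)"
  proof -
    have l: "((\<lambda>v. v * s r \<sigma> + c) has_real_derivative 1 * s r \<sigma> + 0) (at u)"
      by (intro DERIV_add DERIV_cmult_right DERIV_ident DERIV_const)
    show ?thesis using DERIV_cmult[OF DERIV_fun_exp[OF l], of "w \<sigma>"] by simp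
  qed
  then show ?thesis unfolding W_def e c_def[symmetric] by (simp add: mult.assoc)
qed

lemma avg_deriv:
  assumes "r \<in> R"
  shows "((\<lambda>v. avg (y(r:=v)) f) has_real_derivative
          avg (y(r:=u)) (\<lambda>\<sigma>. f \<sigma> * s r \<sigma>) + - (avg (y(r:=u)) f * avg (y(r:=u)) (s r))) (at u)"
proof -
  define A where "A = (\<lambda>v. \<Sum>\<sigma>\<in>S. f \<sigma> * W (y(r:=v)) \<sigma>)"
  define Z where "Z = (\<lambda>v. \<Sum>\<sigma>\<in>S. W (y(r:=v)) \<sigma>)"
  define A' where "A' = (\<Sum>\<sigma>\<in>S. f \<sigma> * (W (y(r:=u)) \<sigma> * s r \<sigma>))"
  define Z' where "Z' = (\<Sum>\<sigma>\<in>S. W (y(r:=u)) \<sigma> * s r \<sigma>)"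
  have dA: "(A has_real_derivative A') (at u)"
    unfolding A_def A'_def by (intro DERIV_sum DERIV_cmult W_deriv assms)
  have dZ: "(Z has_real_derivative Z') (at u)"
    unfolding Z_def Z'_def by (intro DERIV_sum W_deriv assms)
  have Zp: "0 < Z u" unfolding Z_def by (rule Z_pos)
  have "((\<lambda>v. A v / Z v) has_real_derivative (A' * Z u - A u * Z') / (Z u * Z u)) (at u)"
    using dA dZ Zp by (intro DERIV_divide) auto
  moreover have "(A' * Z u - A u * Z') / (Z u * Z u) =
     avg (y(r:=u)) (\<lambda>\<sigma>. f \<sigma> * s r \<sigma>) + - (avg (y(r:=u)) f * avg (y(r:=u)) (s r))"
  proof -
    have a1: "avg (y(r:=u)) (\<lambda>\<sigma>. f \<sigma> * s r \<sigma>) = A' / Z u"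
      unfolding avg_def A'_def Z_def by (simp add: mult_ac)
    have a2: "avg (y(r:=u)) f = A u / Z u" unfolding avg_def A_def Z_def by simp
    have a3: "avg (y(r:=u)) (s r) = Z' / Z u" unfolding avg_def Z'_def Z_def by (simp add: mult_ac)
    show ?thesis unfolding a1 a2 a3 using Zp by (simp add: field_simps)
  qed
  moreover have "(\<lambda>v. A v / Z v) = (\<lambda>v. avg (y(r:=v)) f)"
    unfolding A_def Z_def avg_def by simp
  ultimately show ?thesis by simp
qed

lemma avg_good: "\<forall>f. (\<forall>\<sigma>\<in>S. \<bar>f \<sigma>\<bar> \<le> 1) \<longrightarrow> good R k (\<lambda>y. avg y f) Ab"
proof (induction k)
  case 0 then show ?case using avg_bound by simp
next
  case (Suc k)
  show ?case
  proof (intro allI impI)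
    fix f :: "'a \<Rightarrow> real" assume f: "\<forall>\<sigma>\<in>S. \<bar>f \<sigma>\<bar> \<le> 1"
    show "good R (Suc k) (\<lambda>y. avg y f) Ab"
    proof (simp only: good.simps, intro conjI ballI allI)
      fix y show "\<bar>avg y f\<bar> \<le> Ab 0" using avg_bound[OF f] by simp
    next
      fix r assume r: "r \<in> R"
      have fs: "\<forall>\<sigma>\<in>S. \<bar>f \<sigma> * s r \<sigma>\<bar> \<le> 1" using f sbd
        by (auto simp: abs_mult intro: mult_le_one)
      have ss: "\<forall>\<sigma>\<in>S. \<bar>s r \<sigma>\<bar> \<le> 1" using sbd by auto
      have g1: "good R k (\<lambda>y. avg y (\<lambda>\<sigma>. f \<sigma> * s r \<sigma>)) Ab" using Suc.IH fs by simp
      have g2: "good R k (\<lambda>y. avg y f * avg y (s r)) (\<lambda>i. 2^i * Ab i * Ab i)"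
        using Suc f ss Ab_mono Ab_nonneg by (intro good_mult) auto
      have g: "good R k (\<lambda>y. avg y (\<lambda>\<sigma>. f \<sigma> * s r \<sigma>) + - (avg y f * avg y (s r))) (\<lambda>i. Ab (Suc i))"
        using good_add[OF g1 good_neg[OF g2]] by simp
      show "\<exists>Q'. (\<forall>y u. ((\<lambda>v. avg (y(r:=v)) f) has_real_derivative Q' (y(r:=u))) (at u))
               \<and> good R k Q' (\<lambda>i. Ab (Suc i))"
        using g avg_deriv[OF r]
        by (intro exI[of _ "\<lambda>y. avg y (\<lambda>\<sigma>. f \<sigma> * s r \<sigma>) + - (avg y f * avg y (s r))"] conjI allI) auto
    qed
  qed
qed

lemma prod_good:
  assumes "\<forall>l\<in>{1..m}. \<forall>\<sigma>\<in>S. \<bar>b l \<sigma>\<bar> \<le> 1"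
  shows "good R k (\<lambda>y. \<Prod>l\<in>{1..m}. avg y (b l)) (Pm m)"
  using assms
proof (induction m)
  case 0 then show ?case by (simp add: good_const)
next
  case (Suc m)
  have g1: "good R k (\<lambda>y. avg y (b (Suc m))) Ab" using avg_good Suc.prems by auto
  have g2: "good R k (\<lambda>y. \<Prod>l\<in>{1..m}. avg y (b l)) (Pm m)" using Suc by auto
  have "good R k (\<lambda>y. avg y (b (Suc m)) * (\<Prod>l\<in>{1..m}. avg y (b l))) (\<lambda>i. 2^i * Ab i * Pm m i)"
    using Ab_mono Ab_nonneg Pm_mono Pm_nonneg
    by (intro good_mult[OF g1 g2]) auto
  moreover have "{1..Suc m} = insert (Suc m) {1..m}" by auto
  ultimately show ?case by (simp add: mult_ac)
qed

lemma gibbs_D_bound: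
  assumes "\<forall>l\<in>{1..m}. \<forall>\<sigma>\<in>S. \<bar>b l \<sigma>\<bar> \<le> 1" "distinct rs" "set rs \<subseteq> R"
  shows "\<bar>Dl rs (\<lambda>y. \<Prod>l\<in>{1..m}. avg y (b l)) y\<bar> \<le> Pm m (length rs) * (\<Prod>r\<in>set rs. \<bar>y r\<bar>)"
  using main_bound[OF prod_good[OF assms(1)] assms(2,3) order_refl] by simp

end




abbreviation Nrm :: "real measure" where
  "Nrm \<equiv> density lborel std_normal_density"

lemma prob_Nrm: "prob_space Nrm"
  by (rule prob_space_normal_density) simp

lemma Nrm_integrable_const: "integrable Nrm (\<lambda>x. c)"
proof -
  interpret prob_space Nrm by (rule prob_Nrm)
  show ?thesis by simp
qed

lemma Nrm_sym: "distr Nrm Nrm uminus = Nrm"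
proof (rule measure_eqI)
  show "sets (distr Nrm Nrm uminus) = sets Nrm" by simp
next
  fix A assume A: "A \<in> sets (distr Nrm Nrm uminus)"
  then have A': "A \<in> sets borel" by simp
  have "emeasure (distr Nrm Nrm uminus) A = emeasure Nrm (uminus -` A \<inter> space Nrm)"
    using A' by (intro emeasure_distr) auto
  also have "\<dots> = (\<integral>\<^sup>+ x. ennreal (std_normal_density x) * indicator (uminus -` A) x \<partial>lborel)"
  proof -
    have "uminus -` A \<in> sets (borel::real measure)" using measurable_sets[of uminus borel borel A] A' by simp
    then show ?thesis by (simp add: emeasure_density)
  qed
  also have "\<dots> = (\<integral>\<^sup>+ x. ennreal (std_normal_density (- x)) * indicator A (- x) \<partial>lborel)"
    by (intro nn_integral_cong) (auto simp: normal_density_def indicator_def)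
  also have "\<dots> = (\<integral>\<^sup>+ x. ennreal (std_normal_density x) * indicator A x \<partial>distr lborel borel uminus)"
    using A' by (subst nn_integral_distr) auto
  also have "\<dots> = emeasure Nrm A"
    using A' by (simp add: lborel_distr_uminus emeasure_density)
  finally show "emeasure (distr Nrm Nrm uminus) A = emeasure Nrm A" .
qed

lemma distr_PiM_const_gen:
  assumes M: "prob_space M" and fin: "finite I"
    and f[measurable]: "\<And>i. f i \<in> measurable M M"
    and inv: "\<And>i. i \<in> I \<Longrightarrow> distr M M (f i) = M"
  shows "distr (PiM I (\<lambda>_. M)) (PiM I (\<lambda>_. M)) (\<lambda>x. \<lambda>i\<in>I. f i (x i)) = PiM I (\<lambda>_. M)"
proof -
  interpret P: product_prob_space "\<lambda>_. M" by (intro product_prob_spaceI M)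
  interpret Mp: prob_space M by (rule M)
  have meas: "(\<lambda>x. \<lambda>i\<in>I. f i (x i)) \<in> measurable (PiM I (\<lambda>_. M)) (PiM I (\<lambda>_. M))"
    by measurable
  show ?thesis
  proof (rule P.PiM_eqI[OF fin])
    show "sets (distr (PiM I (\<lambda>_. M)) (PiM I (\<lambda>_. M)) (\<lambda>x. \<lambda>i\<in>I. f i (x i))) = sets (PiM I (\<lambda>_. M))"
      by simp
  next
    fix A assume A: "\<And>i. i \<in> I \<Longrightarrow> A i \<in> sets M"
    have "emeasure (distr (PiM I (\<lambda>_. M)) (PiM I (\<lambda>_. M)) (\<lambda>x. \<lambda>i\<in>I. f i (x i))) (Pi\<^sub>E I A) =
          emeasure (PiM I (\<lambda>_. M)) ((\<lambda>x. \<lambda>i\<in>I. f i (x i)) -` Pi\<^sub>E I A \<inter> space (PiM I (\<lambda>_. M)))"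
      using A fin by (intro emeasure_distr meas) (auto intro: sets_PiM_I_finite)
    also have "(\<lambda>x. \<lambda>i\<in>I. f i (x i)) -` Pi\<^sub>E I A \<inter> space (PiM I (\<lambda>_. M)) = Pi\<^sub>E I (\<lambda>i. f i -` A i \<inter> space M)"
      using A by (auto simp: space_PiM PiE_def Pi_def extensional_def)
    also have "emeasure (PiM I (\<lambda>_. M)) (Pi\<^sub>E I (\<lambda>i. f i -` A i \<inter> space M)) =
          (\<Prod>i\<in>I. emeasure M (f i -` A i \<inter> space M))"
      using A fin by (intro P.emeasure_PiM) auto
    also have "\<dots> = (\<Prod>i\<in>I. emeasure (distr M M (f i)) (A i))"
      using A by (intro prod.cong emeasure_distr [symmetric]) auto
    also have "\<dots> = (\<Prod>i\<in>I. emeasure M (A i))"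
      using inv by (intro prod.cong) auto
    finally show "emeasure (distr (PiM I (\<lambda>_. M)) (PiM I (\<lambda>_. M)) (\<lambda>x. \<lambda>i\<in>I. f i (x i))) (Pi\<^sub>E I A) =
          (\<Prod>i\<in>I. emeasure M (A i))" .
  qed
qed

lemma flip_integral:
  fixes H :: "('a \<Rightarrow> real) \<Rightarrow> real"
  assumes fin: "finite I" and q: "q \<in> I"
    and H[measurable]: "H \<in> borel_measurable (PiM I (\<lambda>_. Nrm))"
  shows "(\<integral>x. H (x(q := - x q)) \<partial>PiM I (\<lambda>_. Nrm)) = (\<integral>x. H x \<partial>PiM I (\<lambda>_. Nrm))"
proof -
  define f where "f = (\<lambda>i::'a. if i = q then (uminus :: real \<Rightarrow> real) else (\<lambda>x. x))"
  have fm[measurable]: "f i \<in> measurable Nrm Nrm" for i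
    unfolding f_def by (cases "i = q") (auto simp: measurable_ident)
  have inv: "distr Nrm Nrm (f i) = Nrm" for i
    unfolding f_def by (cases "i = q") (auto simp: Nrm_sym)
  have meas: "(\<lambda>x. \<lambda>i\<in>I. f i (x i)) \<in> measurable (PiM I (\<lambda>_. Nrm)) (PiM I (\<lambda>_. Nrm))"
    by measurable
  have "(\<integral>x. H x \<partial>PiM I (\<lambda>_. Nrm)) = (\<integral>x. H x \<partial>distr (PiM I (\<lambda>_. Nrm)) (PiM I (\<lambda>_. Nrm)) (\<lambda>x. \<lambda>i\<in>I. f i (x i)))"
    by (simp add: distr_PiM_const_gen[OF prob_Nrm fin fm inv])
  also have "\<dots> = (\<integral>x. H (\<lambda>i\<in>I. f i (x i)) \<partial>PiM I (\<lambda>_. Nrm))"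
    using integral_distr[of "\<lambda>x. \<lambda>i\<in>I. f i (x i)" "PiM I (\<lambda>_. Nrm)" "PiM I (\<lambda>_. Nrm)" H] meas H by simp
  also have "\<dots> = (\<integral>x. H (x(q := - x q)) \<partial>PiM I (\<lambda>_. Nrm))"
  proof (rule Bochner_Integration.integral_cong[OF refl])
    fix x assume "x \<in> space (PiM I (\<lambda>_. Nrm))"
    then have "x \<in> extensional I" by (simp add: space_PiM PiE_def)
    then have "(\<lambda>i\<in>I. f i (x i)) = x(q := - x q)"
      using q by (auto simp: f_def fun_eq_iff extensional_def)
    then show "H (\<lambda>i\<in>I. f i (x i)) = H (x(q := - x q))" by simp
  qed
  finally show ?thesis ..
qed

lemma Nrm_integrable_pow: "integrable Nrm (\<lambda>x. x ^ n)"
  by (subst integrable_density) (auto simp: integrable_std_normal_moment)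

lemma Nrm_integral_sq: "(\<integral>x. x ^ 2 \<partial>Nrm) = 1"
proof -
  have "(\<integral>x. x ^ 2 \<partial>Nrm) = (\<integral>x. std_normal_density x * x ^ (2 * 1) \<partial>lborel)"
    by (subst integral_density) auto
  also have "\<dots> = 1" by (subst integral_std_normal_moment_even) (simp add: fact_numeral)
  finally show ?thesis .
qed

lemma Nrm_integrable_if: "integrable Nrm (\<lambda>z. if P then z ^ n else 1)"
  by (cases P) (simp_all add: Nrm_integrable_pow Nrm_integrable_const)

lemma Nrm_integral_if: "(\<integral>z. (if P then z ^ 2 else 1) \<partial>Nrm) = 1"
proof -
  interpret prob_space Nrm by (rule prob_Nrm)
  have "prob (space Nrm) = 1" by (rule prob_space)
  then show ?thesis by (cases P) (simp_all add: Nrm_integral_sq)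
qed

lemma PiM_prod_integrable:
  assumes fin: "finite I" and T: "T \<subseteq> I"
  shows "integrable (PiM I (\<lambda>_. Nrm)) (\<lambda>x. \<Prod>p\<in>T. x p ^ n)"
proof -
  interpret P: product_prob_space "\<lambda>_. Nrm" by (intro product_prob_spaceI prob_Nrm)
  have int: "integrable (PiM I (\<lambda>_. Nrm)) (\<lambda>x. \<Prod>i\<in>I. (\<lambda>i z. if i \<in> T then z ^ n else 1) i (x i))"
    using fin by (intro P.product_integrable_prod) (auto simp: Nrm_integrable_if)
  have eq: "(\<Prod>i\<in>I. (\<lambda>i z. if i \<in> T then z ^ n else 1) i (x i)) = (\<Prod>p\<in>T. x p ^ n)" for x
  proof -
    have "(\<Prod>i\<in>I. (\<lambda>i z. if i \<in> T then z ^ n else 1) i (x i)) = (\<Prod>i\<in>{i\<in>I. i \<in> T}. x i ^ n)"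
      using fin by (simp add: prod.inter_filter)
    also have "{i\<in>I. i \<in> T} = T" using T by auto
    finally show ?thesis .
  qed
  show ?thesis using int unfolding eq .
qed

lemma PiM_prod_sq_integral:
  assumes fin: "finite I" and T: "T \<subseteq> I"
  shows "(\<integral>x. (\<Prod>p\<in>T. x p ^ 2) \<partial>PiM I (\<lambda>_. Nrm)) = 1"
proof -
  interpret P: product_prob_space "\<lambda>_. Nrm" by (intro product_prob_spaceI prob_Nrm)
  have "(\<integral>x. (\<Prod>i\<in>I. (\<lambda>i z. if i \<in> T then z ^ 2 else 1) i (x i)) \<partial>PiM I (\<lambda>_. Nrm)) =
        (\<Prod>i\<in>I. integral\<^sup>L Nrm ((\<lambda>i z. if i \<in> T then z ^ 2 else 1) i))"
    using fin by (intro P.product_integral_prod) (auto simp: Nrm_integrable_if)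
  also have "\<dots> = 1"
    by (intro prod.neutral ballI) (auto simp: Nrm_integral_if)
  finally have e: "(\<integral>x. (\<Prod>i\<in>I. (\<lambda>i z. if i \<in> T then z ^ 2 else 1) i (x i)) \<partial>PiM I (\<lambda>_. Nrm)) = 1" .
  have eq: "(\<Prod>i\<in>I. (\<lambda>i z. if i \<in> T then z ^ 2 else 1) i (x i)) = (\<Prod>p\<in>T. x p ^ 2)" for x
  proof -
    have "(\<Prod>i\<in>I. (\<lambda>i z. if i \<in> T then z ^ 2 else 1) i (x i)) = (\<Prod>i\<in>{i\<in>I. i \<in> T}. x i ^ 2)"
      using fin by (simp add: prod.inter_filter)
    also have "{i\<in>I. i \<in> T} = T" using T by auto
    finally show ?thesis .
  qed
  show ?thesis using e unfolding eq .
qed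




definition flp :: "(nat \<Rightarrow> nat) \<Rightarrow> nat \<Rightarrow> (nat \<times> nat \<Rightarrow> real) \<Rightarrow> (nat \<times> nat \<Rightarrow> real)" where
  "flp j r g = g((1, j r) := - g (1, j r))"

fun Dg :: "(nat \<Rightarrow> nat) \<Rightarrow> nat list \<Rightarrow> ((nat \<times> nat \<Rightarrow> real) \<Rightarrow> real) \<Rightarrow> (nat \<times> nat \<Rightarrow> real) \<Rightarrow> real" where
  "Dg j [] G = G"
| "Dg j (r # rs) G = (\<lambda>g. (Dg j rs G g - Dg j rs G (flp j r g)) / 2)"

lemma Dg_eq:
  assumes "\<forall>g r. r \<in> K \<longrightarrow> \<Phi> (flp j r g) = \<Phi> g"
    "\<forall>g r. r \<in> K \<longrightarrow> Y (flp j r g) = (Y g)(r := - Y g r)" "set rs \<subseteq> K"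
  shows "Dg j rs (\<lambda>g. \<Phi> g (Y g)) g = Dl rs (\<Phi> g) (Y g)"
  using assms(3)
proof (induction rs arbitrary: g)
  case Nil then show ?case by simp
next
  case (Cons r rs)
  then have r: "r \<in> K" and IH: "\<And>g. Dg j rs (\<lambda>g. \<Phi> g (Y g)) g = Dl rs (\<Phi> g) (Y g)" by auto
  have "Dg j (r # rs) (\<lambda>g. \<Phi> g (Y g)) g =
        (Dl rs (\<Phi> g) (Y g) - Dl rs (\<Phi> (flp j r g)) (Y (flp j r g))) / 2"
    by (simp add: IH)
  also have "\<dots> = (Dl rs (\<Phi> g) (Y g) - Dl rs (\<Phi> g) ((Y g)(r := - Y g r))) / 2"
    using assms(1,2) r by simp
  also have "\<dots> = Dl (r # rs) (\<Phi> g) (Y g)" by (simp add: Dop_def)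
  finally show ?case .
qed

lemma Dg_bound: "(\<And>g. \<bar>G g\<bar> \<le> B) \<Longrightarrow> \<bar>Dg j rs G g\<bar> \<le> B"
proof (induction rs arbitrary: g)
  case Nil then show ?case by simp
next
  case (Cons r rs)
  have "\<bar>Dg j rs G g\<bar> \<le> B" "\<bar>Dg j rs G (flp j r g)\<bar> \<le> B" using Cons by auto
  then show ?case by simp
qed

lemma Dg_meas:
  assumes "G \<in> borel_measurable M" "\<And>r. r \<in> set rs \<Longrightarrow> flp j r \<in> measurable M M"
  shows "Dg j rs G \<in> borel_measurable M"
  using assms(2)
proof (induction rs)
  case Nil then show ?case using assms(1) by simp
next
  case (Cons r rs)
  then have m1: "Dg j rs G \<in> borel_measurable M" and fm: "flp j r \<in> measurable M M" by auto
  have m2: "(\<lambda>g. Dg j rs G (flp j r g)) \<in> borel_measurable M"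
    using measurable_compose[OF fm m1] by (simp add: comp_def)
  show ?case using m1 m2 by simp
qed

lemma flp_meas:
  assumes "(1, j r) \<in> I"
  shows "flp j r \<in> measurable (PiM I (\<lambda>_. Nrm)) (PiM I (\<lambda>_. Nrm))"
proof -
  define q :: "nat \<times> nat" where "q = (1, j r)"
  have e: "flp j r = (\<lambda>g i. if i = q then - g q else g i)"
    by (auto simp: flp_def q_def fun_eq_iff)
  have "(\<lambda>g i. if i = q then - g q else g i) \<in> measurable (PiM I (\<lambda>_. Nrm)) (PiM I (\<lambda>_. Nrm))"
  proof (rule measurable_PiM_single')
    fix i assume i: "i \<in> I"
    show "(\<lambda>g. if i = q then - g q else g i) \<in> measurable (PiM I (\<lambda>_. Nrm)) Nrm"
      using i assms unfolding q_def[symmetric] by (cases "i = q") auto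
  next
    show "(\<lambda>g i. if i = q then - g q else g i) \<in> space (PiM I (\<lambda>_. Nrm)) \<rightarrow> (\<Pi>\<^sub>E i\<in>I. space Nrm)"
      using assms unfolding q_def[symmetric] by (auto simp: space_PiM PiE_def extensional_def)
  qed
  then show ?thesis by (simp add: e)
qed

lemma flip_X_integral:
  fixes H :: "(nat \<times> nat \<Rightarrow> real) \<Rightarrow> real" and X :: "(nat \<times> nat \<Rightarrow> real) \<Rightarrow> real"
  assumes fin: "finite I" and q: "(1, j r) \<in> I"
    and Hm: "H \<in> borel_measurable (PiM I (\<lambda>_. Nrm))"
    and Xm: "X \<in> borel_measurable (PiM I (\<lambda>_. Nrm))"
    and Xf: "\<And>g. X (flp j r g) = - X g"
  shows "(\<integral>g. X g * H (flp j r g) \<partial>PiM I (\<lambda>_. Nrm)) = - (\<integral>g. X g * H g \<partial>PiM I (\<lambda>_. Nrm))"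
proof -
  have m: "(\<lambda>g. X g * H g) \<in> borel_measurable (PiM I (\<lambda>_. Nrm))" using Hm Xm by measurable
  have "(\<integral>g. X g * H g \<partial>PiM I (\<lambda>_. Nrm)) = (\<integral>g. X (flp j r g) * H (flp j r g) \<partial>PiM I (\<lambda>_. Nrm))"
    using flip_integral[OF fin q m] by (simp add: flp_def)
  also have "\<dots> = (\<integral>g. - (X g * H (flp j r g)) \<partial>PiM I (\<lambda>_. Nrm))" by (simp add: Xf)
  also have "\<dots> = - (\<integral>g. X g * H (flp j r g) \<partial>PiM I (\<lambda>_. Nrm))" by (rule integral_minus)
  finally show ?thesis by simp
qed

lemma int_Dg:
  fixes X :: "(nat \<times> nat \<Rightarrow> real) \<Rightarrow> real"
  assumes fin: "finite I" and q: "\<And>r. r \<in> K \<Longrightarrow> (1, j r) \<in> I"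
    and Gm: "G \<in> borel_measurable (PiM I (\<lambda>_. Nrm))" and Gb: "\<And>g. \<bar>G g\<bar> \<le> 1"
    and Xm: "X \<in> borel_measurable (PiM I (\<lambda>_. Nrm))"
    and Xi: "integrable (PiM I (\<lambda>_. Nrm)) X"
    and Xf: "\<And>r g. r \<in> K \<Longrightarrow> X (flp j r g) = - X g"
    and rs: "set rs \<subseteq> K"
  shows "(\<integral>g. X g * Dg j rs G g \<partial>PiM I (\<lambda>_. Nrm)) = (\<integral>g. X g * G g \<partial>PiM I (\<lambda>_. Nrm))"
  using rs
proof (induction rs)
  case Nil then show ?case by simp
next
  case (Cons r rs)
  then have r: "r \<in> K" and IH: "(\<integral>g. X g * Dg j rs G g \<partial>PiM I (\<lambda>_. Nrm)) = (\<integral>g. X g * G g \<partial>PiM I (\<lambda>_. Nrm))"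
    by auto
  define H where "H = Dg j rs G"
  have fm: "flp j r' \<in> measurable (PiM I (\<lambda>_. Nrm)) (PiM I (\<lambda>_. Nrm))" if "r' \<in> set rs" for r'
    using flp_meas[of j r' I, OF q[of r']] that Cons.prems by auto
  have Hm: "H \<in> borel_measurable (PiM I (\<lambda>_. Nrm))" unfolding H_def by (rule Dg_meas[OF Gm fm])
  have Hb: "\<bar>H g\<bar> \<le> 1" for g unfolding H_def by (rule Dg_bound[OF Gb])
  have fr: "flp j r \<in> measurable (PiM I (\<lambda>_. Nrm)) (PiM I (\<lambda>_. Nrm))" using flp_meas[of j r I, OF q[OF r]] .
  have Hfm: "(\<lambda>g. H (flp j r g)) \<in> borel_measurable (PiM I (\<lambda>_. Nrm))"
    using measurable_compose[OF fr Hm] by (simp add: comp_def)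
  have i1: "integrable (PiM I (\<lambda>_. Nrm)) (\<lambda>g. X g * H g)"
  proof (rule Bochner_Integration.integrable_bound[OF Xi])
    show "(\<lambda>g. X g * H g) \<in> borel_measurable (PiM I (\<lambda>_. Nrm))" using Xm Hm by measurable
    show "AE g in PiM I (\<lambda>_. Nrm). norm (X g * H g) \<le> norm (X g)"
      using Hb by (auto simp: abs_mult intro!: mult_left_le)
  qed
  have i2: "integrable (PiM I (\<lambda>_. Nrm)) (\<lambda>g. X g * H (flp j r g))"
  proof (rule Bochner_Integration.integrable_bound[OF Xi])
    show "(\<lambda>g. X g * H (flp j r g)) \<in> borel_measurable (PiM I (\<lambda>_. Nrm))" using Xm Hfm by measurable
    show "AE g in PiM I (\<lambda>_. Nrm). norm (X g * H (flp j r g)) \<le> norm (X g)"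
      using Hb by (auto simp: abs_mult intro!: mult_left_le)
  qed
  have "(\<integral>g. X g * Dg j (r # rs) G g \<partial>PiM I (\<lambda>_. Nrm)) =
        (\<integral>g. (X g * H g - X g * H (flp j r g)) / 2 \<partial>PiM I (\<lambda>_. Nrm))"
    by (simp add: H_def right_diff_distrib)
  also have "\<dots> = ((\<integral>g. X g * H g \<partial>PiM I (\<lambda>_. Nrm)) - (\<integral>g. X g * H (flp j r g) \<partial>PiM I (\<lambda>_. Nrm))) / 2"
    using i1 i2 by (simp add: integral_diff)
  also have "(\<integral>g. X g * H (flp j r g) \<partial>PiM I (\<lambda>_. Nrm)) = - (\<integral>g. X g * H g \<partial>PiM I (\<lambda>_. Nrm))"
    by (rule flip_X_integral[of I j r, OF fin q[OF r] Hm Xm Xf[OF r]])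
  finally show ?case using IH by (simp add: H_def)
qed




theorem lemma3p2:
  fixes m k :: nat
  assumes "k \<ge> 1"
  shows "\<exists>C::real. \<forall>(N::nat) (\<beta>::real) (h::real) (j::nat \<Rightarrow> nat)
                      (b::nat \<Rightarrow> (nat \<Rightarrow> real) \<Rightarrow> real).
           \<beta> > 0 \<longrightarrow> inj_on j {1..k} \<longrightarrow> j ` {1..k} \<subseteq> {2..N} \<longrightarrow>
           (\<forall>l\<in>{1..m}. \<forall>\<sigma>\<in>spins N. b l \<sigma> \<in> {-1..1}) \<longrightarrow>
           (\<integral>g. (\<Prod>r\<in>{1..k}. g (1, j r)) * (\<Prod>l\<in>{1..m}. gibbs_avg N \<beta> h g (b l)) \<partial>disorder N)
             \<le> C * \<beta> ^ k / real N powr (real k / 2)"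
proof (intro exI[of _ "Pm m k"] allI impI)
  fix N :: nat and \<beta> h :: real and j :: "nat \<Rightarrow> nat" and b :: "nat \<Rightarrow> (nat \<Rightarrow> real) \<Rightarrow> real"
  assume \<beta>: "\<beta> > 0" and inj: "inj_on j {1..k}" and jr: "j ` {1..k} \<subseteq> {2..N}"
    and bb: "\<forall>l\<in>{1..m}. \<forall>\<sigma>\<in>spins N. b l \<sigma> \<in> {-1..1}"
  define K where "K = {1..k}"
  define I where "I = pairs N"
  define e where "e = \<beta> / sqrt (real N)"
  define T where "T = (\<lambda>r. (1::nat, j r)) ` K"
  define X where "X = (\<lambda>g::nat \<times> nat \<Rightarrow> real. \<Prod>r\<in>K. g (1, j r))"
  have "(1::nat) \<in> {1..k}" using assms by simp
  then have "j 1 \<in> {2..N}" using jr by blast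
  then have N2: "2 \<le> N" by simp
  have "0 < sqrt (real N)" using N2 by simp
  then have e0: "0 < e" unfolding e_def using \<beta> by (intro divide_pos_pos)
  have injT: "inj_on (\<lambda>r. (1::nat, j r)) K" using inj unfolding K_def inj_on_def by blast
  have qI: "(1, j r) \<in> I" if "r \<in> K" for r
  proof -
    have "j r \<in> {2..N}" using jr that unfolding K_def by blast
    then show ?thesis by (simp add: I_def pairs_def)
  qed
  have TI: "T \<subseteq> I" using qI by (auto simp: T_def)
  have finI: "finite I"
  proof -
    have "I \<subseteq> {1..N} \<times> {1..N}" by (auto simp: I_def pairs_def)
    then show ?thesis by (rule finite_subset) auto
  qed
  have finK: "finite K" by (simp add: K_def)
  have D: "disorder N = PiM I (\<lambda>_. Nrm)" by (simp add: disorder_def I_def)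
  define w where "w = (\<lambda>(g::nat \<times> nat \<Rightarrow> real) (\<sigma>::nat \<Rightarrow> real).
      exp (e * (\<Sum>p\<in>I - T. g p * \<sigma> (fst p) * \<sigma> (snd p)) + h * (\<Sum>i\<in>{1..N}. \<sigma> i)))"
  define s where "s = (\<lambda>r (\<sigma>::nat \<Rightarrow> real). if r \<in> K then \<sigma> 1 * \<sigma> (j r) else 0)"
  define y where "y = (\<lambda>(g::nat \<times> nat \<Rightarrow> real) r. if r \<in> K then e * g (1, j r) else 0)"
  have gib: "gibbs (spins N) (w g) s K" for g
  proof
    show "finite (spins N)" by (simp add: spins_def finite_PiE)
    have "(\<lambda>i\<in>{1..N}. 1::real) \<in> spins N" by (auto simp: spins_def)
    then show "spins N \<noteq> {}" by auto
    show "\<And>\<sigma>. 0 < w g \<sigma>" by (simp add: w_def)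
    show "finite K" by (rule finK)
    fix r \<sigma> assume \<sigma>: "\<sigma> \<in> spins N"
    show "\<bar>s r \<sigma>\<bar> \<le> 1"
    proof (cases "r \<in> K")
      case True
      then have "j r \<in> {2..N}" using jr unfolding K_def by blast
      then have "1 \<in> {1..N}" "j r \<in> {1..N}" using N2 by auto
      then have "\<sigma> 1 \<in> {-1, 1}" "\<sigma> (j r) \<in> {-1, 1}" using \<sigma> by (auto simp: spins_def)
      then show ?thesis using True by (auto simp: s_def)
    qed (simp add: s_def)
  qed
  have sk: "sk_weight N \<beta> h g \<sigma> = w g \<sigma> * exp (\<Sum>r\<in>K. y g r * s r \<sigma>)" for g \<sigma>
  proof -
    have s1: "(\<Sum>p\<in>I. g p * \<sigma> (fst p) * \<sigma> (snd p)) =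
          (\<Sum>p\<in>I - T. g p * \<sigma> (fst p) * \<sigma> (snd p)) + (\<Sum>p\<in>T. g p * \<sigma> (fst p) * \<sigma> (snd p))"
      using TI finI by (rule sum.subset_diff)
    have s2: "(\<Sum>p\<in>T. g p * \<sigma> (fst p) * \<sigma> (snd p)) = (\<Sum>r\<in>K. g (1, j r) * \<sigma> 1 * \<sigma> (j r))"
      unfolding T_def by (subst sum.reindex[OF injT]) simp
    have s3: "e * (\<Sum>r\<in>K. g (1, j r) * \<sigma> 1 * \<sigma> (j r)) = (\<Sum>r\<in>K. y g r * s r \<sigma>)"
      unfolding sum_distrib_left by (intro sum.cong) (auto simp: y_def s_def)
    have "sk_weight N \<beta> h g \<sigma> = exp (e * (\<Sum>p\<in>I. g p * \<sigma> (fst p) * \<sigma> (snd p)) + h * (\<Sum>i\<in>{1..N}. \<sigma> i))"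
      by (simp add: sk_weight_def e_def I_def)
    also have "\<dots> = exp ((e * (\<Sum>p\<in>I - T. g p * \<sigma> (fst p) * \<sigma> (snd p)) + h * (\<Sum>i\<in>{1..N}. \<sigma> i))
                     + e * (\<Sum>r\<in>K. g (1, j r) * \<sigma> 1 * \<sigma> (j r)))"
      unfolding s1 s2 by (simp add: algebra_simps)
    also have "\<dots> = w g \<sigma> * exp (\<Sum>r\<in>K. y g r * s r \<sigma>)"
      unfolding s3 by (simp add: w_def exp_add)
    finally show ?thesis .
  qed
  have ga: "gibbs_avg N \<beta> h g f = gibbs.avg (spins N) (w g) s K (y g) f" for g f
    by (simp add: gibbs_avg_def gibbs.avg_def[OF gib] gibbs.W_def[OF gib] sk)
  define Fq where "Fq = (\<lambda>g z. \<Prod>l\<in>{1..m}. gibbs.avg (spins N) (w g) s K z (b l))"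
  define F where "F = (\<lambda>g. \<Prod>l\<in>{1..m}. gibbs_avg N \<beta> h g (b l))"
  have F_eq: "F = (\<lambda>g. Fq g (y g))" by (simp add: F_def Fq_def ga)
  have wf: "w (flp j r g) = w g" if r: "r \<in> K" for r g
  proof -
    have eqs: "(\<Sum>p\<in>I - T. flp j r g p * \<sigma> (fst p) * \<sigma> (snd p)) = (\<Sum>p\<in>I - T. g p * \<sigma> (fst p) * \<sigma> (snd p))" for \<sigma>
      using r by (intro sum.cong) (auto simp: flp_def T_def)
    show ?thesis unfolding w_def by (simp only: eqs)
  qed
  have yf: "y (flp j r g) = (y g)(r := - y g r)" if r: "r \<in> K" for r g
  proof (rule ext)
    fix r'
    show "y (flp j r g) r' = ((y g)(r := - y g r)) r'"
    proof (cases "r' \<in> K")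
      case True
      then have "r' \<noteq> r \<Longrightarrow> j r' \<noteq> j r" using inj r unfolding K_def inj_on_def by blast
      then show ?thesis using True r by (auto simp: y_def flp_def)
    next
      case False then show ?thesis using r by (auto simp: y_def flp_def)
    qed
  qed
  have Fqf: "\<forall>g r. r \<in> K \<longrightarrow> Fq (flp j r g) = Fq g" using wf by (simp add: Fq_def)
  have yf': "\<forall>g r. r \<in> K \<longrightarrow> y (flp j r g) = (y g)(r := - y g r)" using yf by blast
  define rs where "rs = [1..<Suc k]"
  have rsK: "set rs = K" "distinct rs" "length rs = k" by (auto simp: rs_def K_def)
  have Dg_F: "Dg j rs F g = Dl rs (Fq g) (y g)" for g
    unfolding F_eq by (rule Dg_eq[OF Fqf yf']) (simp add: rsK)
  have bb': "\<forall>l\<in>{1..m}. \<forall>\<sigma>\<in>spins N. \<bar>b l \<sigma>\<bar> \<le> 1"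
  proof (intro ballI)
    fix l \<sigma> assume "l \<in> {1..m}" "\<sigma> \<in> spins N"
    then have "b l \<sigma> \<in> {-1..1}" using bb by blast
    then show "\<bar>b l \<sigma>\<bar> \<le> 1" by auto
  qed
  have Dbound: "\<bar>Dg j rs F g\<bar> \<le> Pm m k * (\<Prod>r\<in>K. \<bar>y g r\<bar>)" for g
    using gibbs.gibbs_D_bound[OF gib bb' rsK(2), of g "y g"] rsK unfolding Dg_F Fq_def by simp
  have Fb: "\<bar>F g\<bar> \<le> 1" for g
  proof -
    have "\<bar>F g\<bar> = (\<Prod>l\<in>{1..m}. \<bar>gibbs_avg N \<beta> h g (b l)\<bar>)" by (simp add: F_def abs_prod)
    also have "\<dots> \<le> 1"
    proof (intro prod_le_1 conjI abs_ge_zero)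
      fix l assume l: "l \<in> {1..m}"
      have "\<forall>\<sigma>\<in>spins N. \<bar>b l \<sigma>\<bar> \<le> 1" using bb' l by blast
      then show "\<bar>gibbs_avg N \<beta> h g (b l)\<bar> \<le> 1"
        unfolding ga by (rule gibbs.avg_bound[OF gib])
    qed
    finally show ?thesis .
  qed
  have Fm: "F \<in> borel_measurable (PiM I (\<lambda>_. Nrm))"
    unfolding F_def gibbs_avg_def sk_weight_def I_def by measurable
  have Xm: "X \<in> borel_measurable (PiM I (\<lambda>_. Nrm))"
    unfolding X_def using qI by measurable
  have XT: "X g = (\<Prod>p\<in>T. g p ^ 1)" for g
    unfolding X_def T_def by (subst prod.reindex[OF injT]) simp
  have Xi: "integrable (PiM I (\<lambda>_. Nrm)) X"
    unfolding XT by (rule PiM_prod_integrable[OF finI TI])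
  have Xf: "X (flp j r g) = - X g" if r: "r \<in> K" for r g
  proof -
    have "X (flp j r g) = flp j r g (1, j r) * (\<Prod>r'\<in>K - {r}. flp j r g (1, j r'))"
      unfolding X_def using finK r by (rule prod.remove)
    also have "(\<Prod>r'\<in>K - {r}. flp j r g (1, j r')) = (\<Prod>r'\<in>K - {r}. g (1, j r'))"
    proof (intro prod.cong refl)
      fix r' assume "r' \<in> K - {r}"
      then have "j r' \<noteq> j r" using inj r unfolding K_def inj_on_def by blast
      then show "flp j r g (1, j r') = g (1, j r')" by (simp add: flp_def)
    qed
    also have "X g = g (1, j r) * (\<Prod>r'\<in>K - {r}. g (1, j r'))"
      unfolding X_def using finK r by (rule prod.remove)
    moreover have "flp j r g (1, j r) = - g (1, j r)" by (simp add: flp_def)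
    ultimately show ?thesis by (simp only:)
  qed
  have key: "(\<integral>g. X g * Dg j rs F g \<partial>PiM I (\<lambda>_. Nrm)) = (\<integral>g. X g * F g \<partial>PiM I (\<lambda>_. Nrm))"
    using int_Dg[OF finI qI Fm Fb Xm Xi Xf, where rs=rs] rsK(1) by simp
  define Bd where "Bd = (\<lambda>g::nat \<times> nat \<Rightarrow> real. Pm m k * e ^ k * (\<Prod>p\<in>T. g p ^ 2))"
  have Bdi: "integrable (PiM I (\<lambda>_. Nrm)) Bd"
    unfolding Bd_def using PiM_prod_integrable[OF finI TI, of 2] by simp
  have BdI: "(\<integral>g. Bd g \<partial>PiM I (\<lambda>_. Nrm)) = Pm m k * e ^ k"
    unfolding Bd_def using PiM_prod_sq_integral[OF finI TI] by simp
  have Dm: "Dg j rs F \<in> borel_measurable (PiM I (\<lambda>_. Nrm))"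
    using Dg_meas[OF Fm, of rs j] flp_meas qI rsK(1) by blast
  have XDi: "integrable (PiM I (\<lambda>_. Nrm)) (\<lambda>g. X g * Dg j rs F g)"
  proof (rule Bochner_Integration.integrable_bound[OF Xi])
    show "(\<lambda>g. X g * Dg j rs F g) \<in> borel_measurable (PiM I (\<lambda>_. Nrm))" using Xm Dm by measurable
    show "AE g in PiM I (\<lambda>_. Nrm). norm (X g * Dg j rs F g) \<le> norm (X g)"
      using Dg_bound[OF Fb] by (auto simp: abs_mult intro!: mult_left_le)
  qed
  have pt: "X g * Dg j rs F g \<le> Bd g" for g
  proof -
    have ya: "(\<Prod>r\<in>K. \<bar>y g r\<bar>) = e ^ k * (\<Prod>r\<in>K. \<bar>g (1, j r)\<bar>)"
    proof -
      have "(\<Prod>r\<in>K. \<bar>y g r\<bar>) = (\<Prod>r\<in>K. e * \<bar>g (1, j r)\<bar>)"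
        using e0 by (intro prod.cong) (auto simp: y_def abs_mult)
      also have "\<dots> = e ^ card K * (\<Prod>r\<in>K. \<bar>g (1, j r)\<bar>)" by (simp add: prod.distrib)
      finally show ?thesis by (simp add: K_def)
    qed
    have Xa: "\<bar>X g\<bar> = (\<Prod>r\<in>K. \<bar>g (1, j r)\<bar>)" by (simp add: X_def abs_prod)
    have sq: "(\<Prod>r\<in>K. \<bar>g (1, j r)\<bar>) * (\<Prod>r\<in>K. \<bar>g (1, j r)\<bar>) = (\<Prod>p\<in>T. g p ^ 2)"
    proof -
      have "(\<Prod>r\<in>K. \<bar>g (1, j r)\<bar>) * (\<Prod>r\<in>K. \<bar>g (1, j r)\<bar>) = (\<Prod>r\<in>K. g (1, j r) ^ 2)"
        by (simp add: prod.distrib[symmetric] power2_eq_square abs_mult_self_eq)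
      also have "\<dots> = (\<Prod>p\<in>T. g p ^ 2)" unfolding T_def by (subst prod.reindex[OF injT]) simp
      finally show ?thesis .
    qed
    have "X g * Dg j rs F g \<le> \<bar>X g\<bar> * \<bar>Dg j rs F g\<bar>" by (simp add: abs_mult[symmetric])
    also have "\<dots> \<le> \<bar>X g\<bar> * (Pm m k * (\<Prod>r\<in>K. \<bar>y g r\<bar>))"
      by (intro mult_left_mono Dbound) simp
    also have "\<dots> = Pm m k * e ^ k * ((\<Prod>r\<in>K. \<bar>g (1, j r)\<bar>) * (\<Prod>r\<in>K. \<bar>g (1, j r)\<bar>))"
      unfolding ya Xa by (simp add: mult_ac)
    also have "\<dots> = Bd g" unfolding sq Bd_def ..
    finally show ?thesis .
  qed
  have "(\<integral>g. (\<Prod>r\<in>{1..k}. g (1, j r)) * (\<Prod>l\<in>{1..m}. gibbs_avg N \<beta> h g (b l)) \<partial>disorder N)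
        = (\<integral>g. X g * F g \<partial>PiM I (\<lambda>_. Nrm))"
    by (simp add: D X_def F_def K_def)
  also have "\<dots> = (\<integral>g. X g * Dg j rs F g \<partial>PiM I (\<lambda>_. Nrm))" by (rule key[symmetric])
  also have "\<dots> \<le> (\<integral>g. Bd g \<partial>PiM I (\<lambda>_. Nrm))"
    by (rule integral_mono[OF XDi Bdi pt])
  also have "\<dots> = Pm m k * e ^ k" by (rule BdI)
  also have "\<dots> = Pm m k * \<beta> ^ k / real N powr (real k / 2)"
  proof -
    have "sqrt (real N) ^ k = real N powr (real k / 2)"
      using N2 by (simp add: powr_half_sqrt[symmetric] powr_power)
    then show ?thesis by (simp add: e_def power_divide)
  qed
  finally show "(\<integral>g. (\<Prod>r\<in>{1..k}. g (1, j r)) * (\<Prod>l\<in>{1..m}. gibbs_avg N \<beta> h g (b l)) \<partial>disorder N)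
             \<le> Pm m k * \<beta> ^ k / real N powr (real k / 2)" .
qed



end
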